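(* Consider the type with a single binary operation $\cdot$, let $\mathcal{LZ}$ be the variety of left-zero semigroups (defined by $x\cdot y=x$), and let $X=\{x,y\}$ be a two-element set. Then the free $\mathcal{LZ}^p$-algebra over $X$ is not a semigroup; specifically, $x\cdot(y\cdot x)\neq(x\cdot y)\cdot x$ in it.
   Context: In the type with one binary operation, $T_m$ is the set of terms in $x_1,\dots,x_m$ in which all $m$ variables occur. Prolongation: for an identity $\sigma$ of the form $u(y_1,\dots,y_n)=v(y_1,\dots,y_n)$ and $m\ge1$, $\sigma^p_m$ is the set of identities $u(r_1,\dots,r_n)=v(r_1,\dots,r_n)$ obtained by substituting $r_i(x_1,\dots,x_m)$ for $y_i$, with $r_i$ ranging over $T_m$; $\sigma^p=\bigcup_m\sigma^p_m$; $\Sigma^p=\bigcup_{\sigma\in\Sigma}\sigma^p$. For a variety $\mathcal{V}$, $\mathcal{V}^p$ is the variety defined by $\mathrm{Id}(\mathcal{V})^p$, where $\mathrm{Id}(\mathcal{V})$ is the set of all identities holding in $\mathcal{V}$. *)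

theory Defs
  imports Main
begin

datatype 'v trm = Var 'v | App "'v trm" "'v trm"

fun vars :: "'v trm \<Rightarrow> 'v set" where
  "vars (Var x) = {x}"
| "vars (App s t) = vars s \<union> vars t"

fun subst :: "('v \<Rightarrow> 'w trm) \<Rightarrow> 'v trm \<Rightarrow> 'w trm" where
  "subst \<sigma> (Var x) = \<sigma> x"
| "subst \<sigma> (App s t) = App (subst \<sigma> s) (subst \<sigma> t)"

fun eval :: "('a \<Rightarrow> 'a \<Rightarrow> 'a) \<Rightarrow> ('v \<Rightarrow> 'a) \<Rightarrow> 'v trm \<Rightarrow> 'a" where
  "eval f a (Var x) = a x"
| "eval f a (App s t) = f (eval f a s) (eval f a t)"

text \<open>Identities are pairs of terms over the countable variable set nat (x_1, x_2, ... = 0, 1, ...).\<close>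
type_synonym identity = "nat trm \<times> nat trm"

text \<open>T_m: terms in x_1..x_m (here variables 0..m-1) in which all m variables occur.\<close>
definition T :: "nat \<Rightarrow> nat trm set" where
  "T m = {t. vars t = {..<m}}"

definition prolong :: "identity set \<Rightarrow> identity set" where
  "prolong \<Sigma> = {(subst s u, subst s v) | u v s m.
      (u, v) \<in> \<Sigma> \<and> m \<ge> 1 \<and> (\<forall>i. s i \<in> T m)}"

definition Id_of :: "(nat \<Rightarrow> nat \<Rightarrow> nat) set \<Rightarrow> identity set" where
  "Id_of K = {(u, v). \<forall>f\<in>K. \<forall>a. eval f a u = eval f a v}"

definition LZ :: "(nat \<Rightarrow> nat \<Rightarrow> nat) set" where
  "LZ = {f. \<forall>x y. f x y = x}"

text \<open>The free algebra over X (variables of type 'x) of the variety defined by \<Sigma>: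
  terms over X modulo the least congruence containing all substitution instances of \<Sigma>.\<close>
inductive free_eq :: "identity set \<Rightarrow> 'x trm \<Rightarrow> 'x trm \<Rightarrow> bool" for \<Sigma> where
  inst: "(u, v) \<in> \<Sigma> \<Longrightarrow> free_eq \<Sigma> (subst s u) (subst s v)"
| refl: "free_eq \<Sigma> t t"
| sym: "free_eq \<Sigma> s t \<Longrightarrow> free_eq \<Sigma> t s"
| trans: "free_eq \<Sigma> s t \<Longrightarrow> free_eq \<Sigma> t r \<Longrightarrow> free_eq \<Sigma> s r"
| cong: "free_eq \<Sigma> s s' \<Longrightarrow> free_eq \<Sigma> t t' \<Longrightarrow> free_eq \<Sigma> (App s t) (App s' t')"

end

theory Submission
  imports Defs
begin

fun lm :: "'v trm \<Rightarrow> 'v" where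
  "lm (Var x) = x"
| "lm (App s t) = lm s"

lemma eval_subst: "eval f a (subst s u) = eval f (\<lambda>i. eval f a (s i)) u"
  by (induction u) auto

lemma eval_LZ: "eval (\<lambda>x y. x) a u = a (lm u)"
  by (induction u) auto

lemma Id_LZ_lm: "(u, v) \<in> Id_of LZ \<Longrightarrow> lm u = lm v"
proof -
  assume "(u, v) \<in> Id_of LZ"
  then have "eval (\<lambda>x y. x) id u = eval (\<lambda>x y. x) id v"
    unfolding Id_of_def LZ_def by auto
  then show ?thesis by (simp add: eval_LZ)
qed

definition g :: "'x trm \<Rightarrow> 'x trm \<Rightarrow> 'x trm" where
  "g e f = (if vars f \<subseteq> vars e then e else App e f)"

lemma vars_g: "vars (g e f) = vars e \<union> vars f"
  unfolding g_def by auto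

lemma vars_eval: "vars (eval g a t) = (\<Union>v\<in>vars t. vars (a v))"
  by (induction t) (auto simp: vars_g)

lemma eval_uniform:
  assumes "\<And>i. vars (b i) = C"
  shows "eval g b u = b (lm u) \<and> vars (eval g b u) = C"
  using assms by (induction u) (auto simp: g_def)

lemma sound_inst:
  assumes "(u, v) \<in> prolong (Id_of LZ)"
  shows "eval g a (subst s u) = eval g a (subst s v)"
proof -
  from assms obtain u0 v0 r m where uv: "u = subst r u0" "v = subst r v0"
    and i: "(u0, v0) \<in> Id_of LZ" and r: "\<forall>i. r i \<in> T m"
    unfolding prolong_def by blast
  define b where "b i = eval g (\<lambda>j. eval g a (s j)) (r i)" for i
  have bv: "\<And>i. vars (b i) = (\<Union>j<m. vars (eval g a (s j)))"
    using r unfolding b_def T_def by (auto simp: vars_eval)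
  have "eval g a (subst s u) = eval g b u0"
    unfolding uv b_def by (simp add: eval_subst)
  also have "\<dots> = b (lm u0)" using eval_uniform[of b _ u0, OF bv] by blast
  also have "\<dots> = b (lm v0)" using Id_LZ_lm[OF i] by simp
  also have "\<dots> = eval g b v0" using eval_uniform[of b _ v0, OF bv] by metis
  also have "\<dots> = eval g a (subst s v)"
    unfolding uv b_def by (simp add: eval_subst)
  finally show ?thesis .
qed

lemma sound: "free_eq (prolong (Id_of LZ)) t t' \<Longrightarrow> eval g a t = eval g a t'"
  by (induction rule: free_eq.induct) (auto simp: sound_inst)

theorem corollary4p12:
  fixes x y :: bool
  defines "x \<equiv> True" and "y \<equiv> False"
  shows "\<not> free_eq (prolong (Id_of LZ))
            (App (Var x) (App (Var y) (Var x)))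
            (App (App (Var x) (Var y)) (Var x))"
proof
  assume "free_eq (prolong (Id_of LZ))
            (App (Var x) (App (Var y) (Var x)))
            (App (App (Var x) (Var y)) (Var x))"
  then have "eval g Var (App (Var x) (App (Var y) (Var x))) =
             eval g Var (App (App (Var x) (Var y)) (Var x))" by (rule sound)
  then show False unfolding x_def y_def by (simp add: g_def)
qed

end
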